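(* A point $(s,p)\in\mathbb{C}^2$ belongs to $\mathbb{G}=\{(z_1+z_2,z_1z_2):z_1,z_2\in\mathbb{D}\}$ if and only if both $1>|p|^2+\mathrm{Im}(\overline{s}p+\overline{s})$ and $2+2|p|^2>|s|^2+|s^2-4p|$.
   Context: $\mathbb{D}$ is the open unit disc in $\mathbb{C}$. *)

theory Defs
  imports "HOL-Analysis.Analysis"
begin

definition unit_disc :: "complex set" where
  "unit_disc = ball 0 1"

definition symmetrized_bidisc :: "(complex \<times> complex) set" where
  "symmetrized_bidisc = {(z1 + z2, z1 * z2) | z1 z2. z1 \<in> unit_disc \<and> z2 \<in> unit_disc}"

end

theory Submission
  imports Defs
begin

lemma im_id:
  fixes z1 z2 :: complex
  shows "Im (cnj (z1+z2) * (z1*z2) + cnj (z1+z2)) =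
         - Im (z1 * of_real (1 - (cmod z2)\<^sup>2) + z2 * of_real (1 - (cmod z1)\<^sup>2))"
  unfolding cmod_power2 by (simp add: power2_eq_square algebra_simps)

lemma q_bound:
  fixes z1 z2 :: complex
  shows "\<bar>Im (z1 * of_real (1 - (cmod z2)\<^sup>2) + z2 * of_real (1 - (cmod z1)\<^sup>2))\<bar>
     \<le> cmod z1 * \<bar>1 - (cmod z2)\<^sup>2\<bar> + cmod z2 * \<bar>1 - (cmod z1)\<^sup>2\<bar>"
proof -
  let ?q = "z1 * of_real (1 - (cmod z2)\<^sup>2) + z2 * of_real (1 - (cmod z1)\<^sup>2)"
  have "\<bar>Im ?q\<bar> \<le> cmod ?q" by (rule abs_Im_le_cmod)
  also have "\<dots> \<le> cmod (z1 * of_real (1 - (cmod z2)\<^sup>2)) + cmod (z2 * of_real (1 - (cmod z1)\<^sup>2))"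
    by (rule norm_triangle_ineq)
  also have "\<dots> = cmod z1 * \<bar>1 - (cmod z2)\<^sup>2\<bar> + cmod z2 * \<bar>1 - (cmod z1)\<^sup>2\<bar>"
    by (simp only: norm_mult norm_of_real)
  finally show ?thesis .
qed

lemma c2_id:
  fixes z1 z2 :: complex
  shows "(cmod (z1+z2))\<^sup>2 + cmod ((z1+z2)\<^sup>2 - 4 * (z1*z2)) = 2 * (cmod z1)\<^sup>2 + 2 * (cmod z2)\<^sup>2"
proof -
  have "(z1+z2)\<^sup>2 - 4 * (z1*z2) = (z1 - z2)\<^sup>2" by (simp add: power2_eq_square algebra_simps)
  hence "cmod ((z1+z2)\<^sup>2 - 4 * (z1*z2)) = (cmod (z1 - z2))\<^sup>2" by (simp add: norm_power)
  moreover have "(cmod (z1+z2))\<^sup>2 + (cmod (z1 - z2))\<^sup>2 = 2 * (cmod z1)\<^sup>2 + 2 * (cmod z2)\<^sup>2"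
    unfolding cmod_power2 by (simp add: power2_eq_square algebra_simps)
  ultimately show ?thesis by simp
qed

lemma main:
  fixes z1 z2 :: complex
  shows "(cmod z1 < 1 \<and> cmod z2 < 1) \<longleftrightarrow>
     (1 > (cmod (z1*z2))\<^sup>2 + Im (cnj (z1+z2) * (z1*z2) + cnj (z1+z2)) \<and>
      2 + 2 * (cmod (z1*z2))\<^sup>2 > (cmod (z1+z2))\<^sup>2 + cmod ((z1+z2)\<^sup>2 - 4 * (z1*z2)))"
proof -
  define a where "a = cmod z1"
  define b where "b = cmod z2"
  define I where "I = Im (z1 * of_real (1 - (cmod z2)\<^sup>2) + z2 * of_real (1 - (cmod z1)\<^sup>2))"
  have a0: "a \<ge> 0" "b \<ge> 0" by (auto simp: a_def b_def)
  have bd: "\<bar>I\<bar> \<le> a * \<bar>1 - b\<^sup>2\<bar> + b * \<bar>1 - a\<^sup>2\<bar>"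
    using q_bound[of z1 z2] by (simp add: I_def a_def b_def)
  have p: "(cmod (z1*z2))\<^sup>2 = a\<^sup>2 * b\<^sup>2" by (simp add: a_def b_def norm_mult power_mult_distrib)
  have e1: "(1 > (cmod (z1*z2))\<^sup>2 + Im (cnj (z1+z2) * (z1*z2) + cnj (z1+z2))) \<longleftrightarrow> 1 > a\<^sup>2*b\<^sup>2 - I"
  proof -
    have "Im (cnj (z1+z2) * (z1*z2) + cnj (z1+z2)) = - I" using im_id[of z1 z2] by (simp only: I_def)
    thus ?thesis using p by linarith
  qed
  have e2: "(2 + 2 * (cmod (z1*z2))\<^sup>2 > (cmod (z1+z2))\<^sup>2 + cmod ((z1+z2)\<^sup>2 - 4 * (z1*z2)))
     \<longleftrightarrow> (1 - a\<^sup>2) * (1 - b\<^sup>2) > 0"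
  proof -
    have "(1 - a\<^sup>2) * (1 - b\<^sup>2) = 1 + a\<^sup>2 * b\<^sup>2 - a\<^sup>2 - b\<^sup>2" by (simp add: algebra_simps)
    thus ?thesis using c2_id[of z1 z2] p unfolding a_def b_def by linarith
  qed
  show ?thesis unfolding e1 e2 a_def[symmetric] b_def[symmetric]
  proof
    assume h: "a < 1 \<and> b < 1"
    have s1: "a\<^sup>2 < 1" "b\<^sup>2 < 1" using h a0 by (auto simp: power2_eq_square intro: mult_strict_mono' order.strict_trans1[OF mult_left_le_one_le])
    hence "\<bar>I\<bar> \<le> a * (1 - b\<^sup>2) + b * (1 - a\<^sup>2)" using bd by simp
    moreover have "1 - a\<^sup>2 * b\<^sup>2 - (a * (1 - b\<^sup>2) + b * (1 - a\<^sup>2)) = (1 - a*b) * (1 - a) * (1 - b)"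
      by (simp add: power2_eq_square algebra_simps)
    moreover have "(1 - a*b) * (1 - a) * (1 - b) > 0"
    proof -
      have "a * b < 1" using h a0 by (metis mult_strict_mono' mult_1_right less_eq_real_def)
      thus ?thesis using h by simp
    qed
    ultimately show "1 > a\<^sup>2*b\<^sup>2 - I \<and> (1 - a\<^sup>2) * (1 - b\<^sup>2) > 0" using s1 by auto
  next
    assume h: "1 > a\<^sup>2*b\<^sup>2 - I \<and> (1 - a\<^sup>2) * (1 - b\<^sup>2) > 0"
    hence "(a\<^sup>2 < 1 \<and> b\<^sup>2 < 1) \<or> (a\<^sup>2 > 1 \<and> b\<^sup>2 > 1)"
      by (smt (verit) mult_nonneg_nonpos mult_nonpos_nonneg mult_nonpos_nonpos)
    thus "a < 1 \<and> b < 1"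
    proof
      assume "a\<^sup>2 < 1 \<and> b\<^sup>2 < 1" thus ?thesis using a0
        by (metis abs_of_nonneg abs_square_less_1)
    next
      assume s: "a\<^sup>2 > 1 \<and> b\<^sup>2 > 1"
      have ab: "a > 1" "b > 1" using s a0
        by (metis abs_of_nonneg abs_square_less_1 linorder_not_le one_le_power power_one nle_le less_le)+
      have "\<bar>I\<bar> \<le> a * (b\<^sup>2 - 1) + b * (a\<^sup>2 - 1)" using bd s by simp
      moreover have "a\<^sup>2 * b\<^sup>2 - 1 - (a * (b\<^sup>2 - 1) + b * (a\<^sup>2 - 1)) = (a*b - 1) * (a - 1) * (b - 1)"
        by (simp add: power2_eq_square algebra_simps)
      moreover have "(a*b - 1) * (a - 1) * (b - 1) > 0"
      proof -
        have "a * b > 1" using ab by (metis less_1_mult)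
        thus ?thesis using ab by simp
      qed
      ultimately have False using h by auto
      thus ?thesis ..
    qed
  qed
qed

theorem corollary3p4:
  fixes s p :: complex
  shows "(s, p) \<in> symmetrized_bidisc \<longleftrightarrow>
     (1 > (cmod p)\<^sup>2 + Im (cnj s * p + cnj s) \<and>
      2 + 2 * (cmod p)\<^sup>2 > (cmod s)\<^sup>2 + cmod (s\<^sup>2 - 4 * p))"
proof -
  define w where "w = csqrt (s\<^sup>2 - 4 * p)"
  define z1 where "z1 = (s + w) / 2"
  define z2 where "z2 = (s - w) / 2"
  have w2: "w\<^sup>2 = s\<^sup>2 - 4 * p" by (simp add: w_def)
  have hs: "s = z1 + z2" by (simp add: z1_def z2_def field_simps)
  have hp: "p = z1 * z2"
  proof -
    have "z1 * z2 = (s\<^sup>2 - w\<^sup>2) / 4" by (simp add: z1_def z2_def power2_eq_square field_simps)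
    thus ?thesis using w2 by simp
  qed
  have mem: "(s, p) \<in> symmetrized_bidisc \<longleftrightarrow> cmod z1 < 1 \<and> cmod z2 < 1"
  proof
    assume "(s, p) \<in> symmetrized_bidisc"
    then obtain u v where uv: "s = u + v" "p = u * v" "cmod u < 1" "cmod v < 1"
      by (auto simp: symmetrized_bidisc_def unit_disc_def)
    have "(X - u) * (X - v) = (X - z1) * (X - z2)" for X
    proof -
      have "(X - u) * (X - v) = X*X - s*X + p" using uv by (simp add: algebra_simps)
      moreover have "(X - z1) * (X - z2) = X*X - s*X + p" using hs hp by (simp add: algebra_simps)
      ultimately show ?thesis by simp
    qed
    from this[of u] have "u = z1 \<or> u = z2" by simp
    moreover from this have "v = z2 \<or> v = z1" using uv hs by auto
    ultimately show "cmod z1 < 1 \<and> cmod z2 < 1" using uv hs by auto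
  next
    assume "cmod z1 < 1 \<and> cmod z2 < 1"
    thus "(s, p) \<in> symmetrized_bidisc" using hs hp
      by (auto simp: symmetrized_bidisc_def unit_disc_def)
  qed
  show ?thesis unfolding mem using main[of z1 z2] hs hp by simp
qed

end
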